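(* Under the standing setup and the algorithm/assumptions described in the context, let $m:\mathbb{N}\to\mathbb{N}$ be strictly increasing with $\lim_{l\to\infty}\mathcal{M}_{\bar\gamma}^{F_{m(l)},\phi}(x_{m(l)})=0$. Then every cluster point $x^\star$ of $(x_{m(l)})_{l=1}^\infty$ is a stationary point of $F+\phi=h+g\circ\mathfrak{S}+\phi$, i.e. $0\in\partial_F(F+\phi)(x^\star)$.
   Context: Standing setup: $\mathcal{X},\mathcal{Z}$ finite-dimensional real Hilbert spaces; $\phi:\mathcal{X}\to\mathbb{R}\cup\{+\infty\}$ proper lower semicontinuous convex; $h:\mathcal{X}\to\mathbb{R}$ differentiable with $\nabla h$ Lipschitz on $\mathrm{dom}\,\phi$; $\mathfrak{S}:\mathcal{X}\to\mathcal{Z}$ continuously differentiable; $g:\mathcal{Z}\to\mathbb{R}$ Lipschitz with constant $L_g>0$ and $\eta$-weakly convex ($g+\frac\eta2\|\cdot\|^2$ convex, $\eta>0$); $F:=h+g\circ\mathfrak{S}$ and $\mathrm{argmin}_x(F+\phi)\ne\emptyset$. Fréchet subdifferential: for proper $J$ and $\bar x\in\mathrm{dom}\,J$, $\partial_FJ(\bar x)=\{v:\liminf_{x\to\bar x,x\neq\bar x}\frac{J(x)-J(\bar x)-\langle v,x-\bar x\rangle}{\|x-\bar x\|}\ge0\}$, and $\emptyset$ otherwise. Notation: $\mathrm{prox}_{\gamma\phi}(\bar x)=\mathrm{argmin}_x(\phi(x)+\frac1{2\gamma}\|x-\bar x\|^2)$; ${}^{\mu}g(\bar z)=\min_z(g(z)+\frac1{2\mu}\|z-\bar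 z\|^2)$ for $\mu\in(0,\eta^{-1})$. $F_n:=h+{}^{\mu_n}g\circ\mathfrak{S}$; $\mathcal{M}_\gamma^{F_n,\phi}(x)=\|(x-\mathrm{prox}_{\gamma\phi}(x-\gamma\nabla F_n(x)))/\gamma\|$. Algorithm and assumptions: fix $x_1\in\mathrm{dom}\,\phi$, $c\in(0,1)$. (a) $(\mu_n)\subset(0,\frac1{2\eta}]$, $\mu_n\to0$, $\sum\mu_n=+\infty$, $M^{-1}\le\mu_{n+1}/\mu_n\le1$ for some $M\ge1$. (b) $\nabla F_n$ Lipschitz on $\mathrm{dom}\,\phi$ with constant $L_{\nabla F_n}=\varpi_1+\varpi_2\mu_n^{-1}$, $\varpi_1\ge0$, $\varpi_2>0$. (c) $\gamma_n>0$ with $(F_n+\phi)(\mathrm{prox}_{\gamma_n\phi}(x_n-\gamma_n\nabla F_n(x_n)))\le(F_n+\phi)(x_n)-c\gamma_n(\mathcal{M}_{\gamma_n}^{F_n,\phi}(x_n))^2$ and $\beta L_{\nabla F_n}^{-1}\le\gamma_n\le\bar\gamma$ for fixed $\beta,\bar\gamma>0$. (d) $x_{n+1}=\mathrm{prox}_{\gamma_n\phi}(x_n-\gamma_n\nabla F_n(x_n))$. *)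

theory Defs
  imports "HOL-Analysis.Analysis"
begin

text \<open>Extended-real-valued functions \<open>\<phi> : X \<rightarrow> \<real> \<union> {+\<infinity>}\<close> are modelled with codomain ereal.\<close>

definition edom :: "('a \<Rightarrow> ereal) \<Rightarrow> 'a set" where
  "edom f = {x. f x < \<infinity>}"

definition proper_fun :: "('a \<Rightarrow> ereal) \<Rightarrow> bool" where
  "proper_fun f \<longleftrightarrow> (\<forall>x. f x \<noteq> -\<infinity>) \<and> (\<exists>x. f x < \<infinity>)"

definition lsc_fun :: "('a::topological_space \<Rightarrow> ereal) \<Rightarrow> bool" where
  "lsc_fun f \<longleftrightarrow> (\<forall>x. f x \<le> Liminf (at x) f)"

definition econvex_fun :: "('a::real_vector \<Rightarrow> ereal) \<Rightarrow> bool" where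
  "econvex_fun f \<longleftrightarrow> (\<forall>x y t. 0 \<le> t \<longrightarrow> t \<le> 1 \<longrightarrow>
      f ((1 - t) *\<^sub>R x + t *\<^sub>R y) \<le> ereal (1 - t) * f x + ereal t * f y)"

definition gradient :: "('a::real_inner \<Rightarrow> real) \<Rightarrow> 'a \<Rightarrow> 'a" where
  "gradient f x = (THE v. (f has_derivative (\<lambda>u. v \<bullet> u)) (at x))"

definition prox :: "real \<Rightarrow> ('a::real_normed_vector \<Rightarrow> ereal) \<Rightarrow> 'a \<Rightarrow> 'a" where
  "prox \<gamma> \<phi> xb = (THE x. \<forall>y. \<phi> x + ereal ((norm (x - xb))\<^sup>2 / (2 * \<gamma>))
                               \<le> \<phi> y + ereal ((norm (y - xb))\<^sup>2 / (2 * \<gamma>)))"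

definition moreau_env :: "real \<Rightarrow> ('b::real_normed_vector \<Rightarrow> real) \<Rightarrow> 'b \<Rightarrow> real" where
  "moreau_env \<mu> g zb = (INF z. g z + (norm (z - zb))\<^sup>2 / (2 * \<mu>))"

definition residual :: "real \<Rightarrow> ('a::real_inner \<Rightarrow> real) \<Rightarrow> ('a \<Rightarrow> ereal) \<Rightarrow> 'a \<Rightarrow> real" where
  "residual \<gamma> F \<phi> x = norm ((1 / \<gamma>) *\<^sub>R (x - prox \<gamma> \<phi> (x - \<gamma> *\<^sub>R gradient F x)))"

definition frechet_subdiff :: "('a::real_inner \<Rightarrow> ereal) \<Rightarrow> 'a \<Rightarrow> 'a set" where
  "frechet_subdiff J xb =
     (if \<bar>J xb\<bar> = \<infinity> then {}
      else {v. 0 \<le> Liminf (at xb)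
                 (\<lambda>x. (J x - J xb - ereal (v \<bullet> (x - xb))) / ereal (norm (x - xb)))})"

definition cluster_point :: "(nat \<Rightarrow> 'a::topological_space) \<Rightarrow> 'a \<Rightarrow> bool" where
  "cluster_point s a \<longleftrightarrow> (\<exists>r. strict_mono r \<and> (s \<circ> r) \<longlonglongrightarrow> a)"

end

theory Submission
  imports Defs
begin

lemma small_t_limit:
  fixes a b c :: real
  assumes H: "\<And>t. 0 < t \<Longrightarrow> t \<le> 1 \<Longrightarrow> b - t * c \<le> a"
  shows "b \<le> a"
proof (rule ccontr)
  assume "\<not> b \<le> a"
  hence d: "b - a > 0" by simp
  define t where "t = min 1 ((b - a) / (\<bar>c\<bar> + 1))"
  have t0: "0 < t" "t \<le> 1" using d by (auto simp: t_def)
  have "t * c \<le> t * \<bar>c\<bar>" using t0 by (simp add: mult_left_mono)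
  also have "t * \<bar>c\<bar> \<le> (b - a) / (\<bar>c\<bar> + 1) * \<bar>c\<bar>"
    by (rule mult_right_mono) (auto simp: t_def)
  also have "\<dots> < b - a" using d by (simp add: field_simps)
  finally have "t * c < b - a" .
  with H[OF t0] show False by simp
qed

definition pg :: "real \<Rightarrow> ('z::real_normed_vector \<Rightarrow> real) \<Rightarrow> 'z \<Rightarrow> 'z" where
  "pg \<mu> g w = (SOME z. \<forall>z'. g z + (norm (z - w))\<^sup>2 / (2 * \<mu>) \<le> g z' + (norm (z' - w))\<^sup>2 / (2 * \<mu>))"

lemma moreau_min_exists:
  fixes g :: "'z::euclidean_space \<Rightarrow> real"
  assumes lip: "lipschitz_on Lg UNIV g" and Lg: "Lg \<ge> 0" and mu: "\<mu> > 0"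
  shows "\<exists>z. \<forall>z'. g z + (norm (z - w))\<^sup>2 / (2 * \<mu>) \<le> g z' + (norm (z' - w))\<^sup>2 / (2 * \<mu>)"
proof -
  let ?f = "\<lambda>z. g z + (norm (z - w))\<^sup>2 / (2 * \<mu>)"
  have cg: "continuous_on UNIV g" using lipschitz_on_continuous_on[OF lip] .
  have cf: "continuous_on (cball w (2*\<mu>*Lg)) ?f"
    using mu by (intro continuous_intros continuous_on_subset[OF cg]) auto
  obtain z where z: "z \<in> cball w (2*\<mu>*Lg)" and zmin: "\<forall>y\<in>cball w (2*\<mu>*Lg). ?f z \<le> ?f y"
  proof -
    have "cball w (2*\<mu>*Lg) \<noteq> {}" using mu Lg by (simp add: not_less)
    from continuous_attains_inf[OF compact_cball this cf] show ?thesis using that by blast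
  qed
  have "?f z \<le> ?f y" for y
  proof (cases "y \<in> cball w (2*\<mu>*Lg)")
    case True thus ?thesis using zmin by auto
  next
    case False
    hence d: "norm (y - w) > 2*\<mu>*Lg" by (simp add: dist_norm norm_minus_commute)
    have "\<bar>g y - g w\<bar> \<le> Lg * norm (y - w)"
      using lipschitz_onD[OF lip, of y w] by (simp add: dist_norm dist_real_def)
    hence gy: "g w - Lg * norm (y - w) \<le> g y" by linarith
    have "(2*\<mu>*Lg) * norm (y - w) \<le> norm (y - w) * norm (y - w)"
      using d by (intro mult_right_mono) auto
    hence "Lg * norm (y - w) \<le> (norm (y - w))\<^sup>2 / (2 * \<mu>)"
      using mu by (simp add: field_simps power2_eq_square)
    hence "?f w \<le> ?f y" using gy by simp
    moreover have "w \<in> cball w (2*\<mu>*Lg)" using mu Lg by simp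
    hence "?f z \<le> ?f w" using zmin by blast
    ultimately show ?thesis by linarith
  qed
  thus ?thesis by blast
qed

lemma pg_min:
  fixes g :: "'z::euclidean_space \<Rightarrow> real"
  assumes "lipschitz_on Lg UNIV g" "Lg \<ge> 0" "\<mu> > 0"
  shows "g (pg \<mu> g w) + (norm (pg \<mu> g w - w))\<^sup>2 / (2 * \<mu>) \<le> g z' + (norm (z' - w))\<^sup>2 / (2 * \<mu>)"
  using someI_ex[OF moreau_min_exists[OF assms, of w]] unfolding pg_def by blast

lemma moreau_env_eq:
  fixes g :: "'z::euclidean_space \<Rightarrow> real"
  assumes "lipschitz_on Lg UNIV g" "Lg \<ge> 0" "\<mu> > 0"
  shows "moreau_env \<mu> g w = g (pg \<mu> g w) + (norm (pg \<mu> g w - w))\<^sup>2 / (2 * \<mu>)"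
proof -
  let ?f = "\<lambda>z. g z + (norm (z - w))\<^sup>2 / (2 * \<mu>)"
  have m: "\<And>z. ?f (pg \<mu> g w) \<le> ?f z" using pg_min[OF assms] by blast
  have "bdd_below (range ?f)" by (rule bdd_belowI2[where m="?f (pg \<mu> g w)"]) (rule m)
  hence "(INF z. ?f z) \<le> ?f (pg \<mu> g w)" by (rule cINF_lower) simp
  moreover have "?f (pg \<mu> g w) \<le> (INF z. ?f z)" by (rule cINF_greatest) (auto intro: m)
  ultimately show ?thesis unfolding moreau_env_def by linarith
qed

lemma min_dist:
  fixes g :: "'z::euclidean_space \<Rightarrow> real"
  assumes lip: "lipschitz_on Lg UNIV g" and Lg: "Lg \<ge> 0" and mu: "\<mu> > 0"
    and zmin: "\<And>z'. g z + (norm (z - w))\<^sup>2 / (2 * \<mu>) \<le> g z' + (norm (z' - w))\<^sup>2 / (2 * \<mu>)"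
  shows "norm (z - w) \<le> 2 * \<mu> * Lg"
proof -
  have "\<bar>g w - g z\<bar> \<le> Lg * norm (w - z)"
    using lipschitz_onD[OF lip, of w z] by (simp add: dist_norm dist_real_def)
  hence a: "g w - g z \<le> Lg * norm (z - w)" by (simp add: norm_minus_commute)
  have "g z + (norm (z - w))\<^sup>2 / (2 * \<mu>) \<le> g w" using zmin[of w] by simp
  hence "(norm (z - w))\<^sup>2 / (2 * \<mu>) \<le> Lg * norm (z - w)" using a by linarith
  hence b: "norm (z - w) * norm (z - w) \<le> (2 * \<mu> * Lg) * norm (z - w)"
    using mu by (simp add: field_simps power2_eq_square)
  show ?thesis
  proof (cases "norm (z - w) = 0")
    case True thus ?thesis using mu Lg by simp
  next
    case False thus ?thesis using b by (simp add: mult_le_cancel_right)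
  qed
qed

lemma norm_lin_sq:
  fixes z D w :: "'a::real_inner"
  shows "(norm (z + t *\<^sub>R D - w))\<^sup>2 = (norm (z - w))\<^sup>2 + 2 * t * ((z - w) \<bullet> D) + t\<^sup>2 * (norm D)\<^sup>2"
proof -
  have eq: "z + t *\<^sub>R D - w = (z - w) + t *\<^sub>R D" by (simp add: algebra_simps)
  have "(norm (z + t *\<^sub>R D - w))\<^sup>2 = (norm ((z - w) + t *\<^sub>R D))\<^sup>2" by (simp only: eq)
  also have "\<dots> = ((z - w) + t *\<^sub>R D) \<bullet> ((z - w) + t *\<^sub>R D)" by (simp only: power2_norm_eq_inner)
  also have "\<dots> = (z - w) \<bullet> (z - w) + 2 * t * ((z - w) \<bullet> D) + t\<^sup>2 * (D \<bullet> D)"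
    by (simp add: inner_add_left inner_add_right inner_commute power2_eq_square)
  finally show ?thesis by (simp add: power2_norm_eq_inner)
qed

lemma weak_subgrad:
  fixes g :: "'z::euclidean_space \<Rightarrow> real"
  assumes cvx: "convex_on UNIV (\<lambda>z. g z + \<eta> / 2 * (norm z)\<^sup>2)" and mu: "\<mu> > 0"
    and zmin: "\<And>z'. g z + (norm (z - w))\<^sup>2 / (2 * \<mu>) \<le> g z' + (norm (z' - w))\<^sup>2 / (2 * \<mu>)"
  shows "g z + ((1/\<mu>) *\<^sub>R (w - z)) \<bullet> (z' - z) - \<eta> / 2 * (norm (z' - z))\<^sup>2 \<le> g z'"
proof -
  define D where "D = z' - z"
  define a where "a = (z - w) \<bullet> D"
  define b where "b = (z - 0) \<bullet> D"
  define n where "n = (norm D)\<^sup>2"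
  have key: "g z - \<eta>/2*n - a/\<mu> - t * (n/(2*\<mu>) - \<eta>*n/2) \<le> g z'" if t: "0 < t" "t \<le> 1" for t
  proof -
    define zt where "zt = z + t *\<^sub>R D"
    have zt': "(1 - t) *\<^sub>R z + t *\<^sub>R z' = zt" by (simp add: zt_def D_def algebra_simps)
    have e1: "(norm (zt - w))\<^sup>2 = (norm (z - w))\<^sup>2 + 2*t*a + t\<^sup>2*n"
      unfolding zt_def a_def n_def by (rule norm_lin_sq)
    have e2: "(norm zt)\<^sup>2 = (norm z)\<^sup>2 + 2*t*b + t\<^sup>2*n"
      using norm_lin_sq[of z t D 0] unfolding zt_def b_def n_def by simp
    have e3: "(norm z')\<^sup>2 = (norm z)\<^sup>2 + 2*b + n"
      using norm_lin_sq[of z 1 D 0] unfolding b_def n_def by (simp add: D_def)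
    have i: "g zt + \<eta>/2*(norm zt)\<^sup>2 \<le> (1-t)*(g z + \<eta>/2*(norm z)\<^sup>2) + t*(g z' + \<eta>/2*(norm z')\<^sup>2)"
      using convex_onD[OF cvx, of t z z'] t zt' by simp
    have ii: "g z + (norm (z - w))\<^sup>2 / (2 * \<mu>) \<le> g zt + (norm (zt - w))\<^sup>2 / (2 * \<mu>)"
      by (rule zmin)
    have i1: "g zt + \<eta>/2*((norm z)\<^sup>2 + 2*t*b + t\<^sup>2*n) \<le> (1-t)*(g z + \<eta>/2*(norm z)\<^sup>2) + t*(g z' + \<eta>/2*((norm z)\<^sup>2 + 2*b + n))"
      using i unfolding e2 e3 .
    have id: "(1-t)*(g z + \<eta>/2*(norm z)\<^sup>2) + t*(g z' + \<eta>/2*((norm z)\<^sup>2 + 2*b + n)) - (\<eta>/2*((norm z)\<^sup>2 + 2*t*b + t\<^sup>2*n)) = (1-t)*g z + t*g z' + \<eta>/2*(t*n - t\<^sup>2*n)"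
      by (simp add: field_simps power2_eq_square)
    have i2: "g zt \<le> (1-t)*g z + t*g z' + \<eta>/2*(t*n - t\<^sup>2*n)"
      using i1 id by linarith
    have ii2: "g z \<le> g zt + (2*t*a + t\<^sup>2*n) / (2*\<mu>)"
      using ii e1 by (simp add: add_divide_distrib)
    have "t * g z \<le> t * g z' + \<eta>/2*(t*n - t\<^sup>2*n) + (2*t*a + t\<^sup>2*n) / (2*\<mu>)"
      using i2 ii2 by (simp add: algebra_simps)
    hence "t * (g z - \<eta>/2*n - a/\<mu> - t * (n/(2*\<mu>) - \<eta>*n/2)) \<le> t * g z'"
      using mu by (simp add: algebra_simps power2_eq_square add_divide_distrib diff_divide_distrib)
    thus ?thesis using t by simp
  qed
  have "g z - \<eta>/2*n - a/\<mu> \<le> g z'" by (rule small_t_limit[OF key])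
  moreover have "((1/\<mu>) *\<^sub>R (w - z)) \<bullet> (z' - z) = - a/\<mu>"
    by (simp add: a_def D_def inner_diff_left)
  ultimately show ?thesis by (simp add: n_def D_def)
qed


lemma norm_diff_sq:
  fixes a d :: "'a::real_inner"
  shows "(norm (a - d))\<^sup>2 = (norm a)\<^sup>2 - 2 * (a \<bullet> d) + (norm d)\<^sup>2"
  by (simp add: power2_norm_eq_inner inner_diff_left inner_diff_right inner_commute)

lemma pg_lip:
  fixes g :: "'z::euclidean_space \<Rightarrow> real"
  assumes lip: "lipschitz_on Lg UNIV g" and Lg: "Lg \<ge> 0" and mu: "\<mu> > 0" "\<mu> \<le> 1 / (2 * \<eta>)"
    and eta: "\<eta> > 0" and cvx: "convex_on UNIV (\<lambda>z. g z + \<eta> / 2 * (norm z)\<^sup>2)"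
  shows "norm (pg \<mu> g w - pg \<mu> g w') \<le> 2 * norm (w - w')"
proof -
  define z where "z = pg \<mu> g w"
  define z' where "z' = pg \<mu> g w'"
  have s1: "g z + ((1/\<mu>) *\<^sub>R (w - z)) \<bullet> (z' - z) - \<eta> / 2 * (norm (z' - z))\<^sup>2 \<le> g z'"
    unfolding z_def by (rule weak_subgrad[OF cvx mu(1) pg_min[OF lip Lg mu(1)]])
  have s2: "g z' + ((1/\<mu>) *\<^sub>R (w' - z')) \<bullet> (z - z') - \<eta> / 2 * (norm (z - z'))\<^sup>2 \<le> g z"
    unfolding z'_def by (rule weak_subgrad[OF cvx mu(1) pg_min[OF lip Lg mu(1)]])
  have id: "((1/\<mu>) *\<^sub>R (w - z)) \<bullet> (z' - z) + ((1/\<mu>) *\<^sub>R (w' - z')) \<bullet> (z - z')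
      = (1/\<mu>) * ((w - w') \<bullet> (z' - z) + (norm (z' - z))\<^sup>2)"
    by (simp add: inner_diff_left inner_diff_right power2_norm_eq_inner inner_commute algebra_simps)
  have nz: "norm (z - z') = norm (z' - z)" by (rule norm_minus_commute)
  have "(1/\<mu>) * ((w - w') \<bullet> (z' - z) + (norm (z' - z))\<^sup>2) \<le> \<eta> * (norm (z' - z))\<^sup>2"
  proof -
    have "\<eta> / 2 * (norm (z - z'))\<^sup>2 + \<eta> / 2 * (norm (z' - z))\<^sup>2 = \<eta> * (norm (z' - z))\<^sup>2"
      unfolding nz by simp
    thus ?thesis using s1 s2 id by linarith
  qed
  hence "(w - w') \<bullet> (z' - z) + (norm (z' - z))\<^sup>2 \<le> \<mu> * \<eta> * (norm (z' - z))\<^sup>2"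
    using mu by (simp add: field_simps)
  moreover have "\<mu> * \<eta> \<le> 1/2" using mu eta by (simp add: field_simps)
  hence "\<mu> * \<eta> * (norm (z' - z))\<^sup>2 \<le> 1/2 * (norm (z' - z))\<^sup>2" by (intro mult_right_mono) auto
  moreover have "- ((w - w') \<bullet> (z' - z)) \<le> norm (w - w') * norm (z' - z)"
    using norm_cauchy_schwarz[of "w' - w" "z' - z"] by (simp add: inner_diff_left norm_minus_commute)
  ultimately have "norm (z' - z) * norm (z' - z) \<le> (2 * norm (w - w')) * norm (z' - z)"
    by (simp add: power2_eq_square algebra_simps)
  hence "norm (z' - z) \<le> 2 * norm (w - w')"
    by (cases "norm (z' - z) = 0") (auto simp: mult_le_cancel_right)
  thus ?thesis by (simp add: z_def z'_def norm_minus_commute)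
qed

lemma moreau_bound:
  fixes g :: "'z::euclidean_space \<Rightarrow> real"
  assumes lip: "lipschitz_on Lg UNIV g" and Lg: "Lg \<ge> 0" and mu: "\<mu> > 0" "\<mu> \<le> 1 / (2 * \<eta>)"
    and eta: "\<eta> > 0" and cvx: "convex_on UNIV (\<lambda>z. g z + \<eta> / 2 * (norm z)\<^sup>2)"
  shows "\<bar>moreau_env \<mu> g y - moreau_env \<mu> g w - ((1/\<mu>) *\<^sub>R (w - pg \<mu> g w)) \<bullet> (y - w)\<bar>
          \<le> 3 / \<mu> * (norm (y - w))\<^sup>2"
proof -
  define z where "z = pg \<mu> g w"
  define z' where "z' = pg \<mu> g y"
  define d where "d = y - w"
  have ew: "moreau_env \<mu> g w = g z + (norm (z - w))\<^sup>2 / (2 * \<mu>)"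
    unfolding z_def by (rule moreau_env_eq[OF lip Lg mu(1)])
  have ey: "moreau_env \<mu> g y = g z' + (norm (z' - y))\<^sup>2 / (2 * \<mu>)"
    unfolding z'_def by (rule moreau_env_eq[OF lip Lg mu(1)])
  have m1: "moreau_env \<mu> g y \<le> g z + (norm (z - y))\<^sup>2 / (2 * \<mu>)"
    unfolding ey z'_def by (rule pg_min[OF lip Lg mu(1)])
  have m2: "moreau_env \<mu> g w \<le> g z' + (norm (z' - w))\<^sup>2 / (2 * \<mu>)"
    unfolding ew z_def by (rule pg_min[OF lip Lg mu(1)])
  have q1: "(norm (z - y))\<^sup>2 = (norm (z - w))\<^sup>2 - 2 * ((z - w) \<bullet> d) + (norm d)\<^sup>2"
    using norm_diff_sq[of "z - w" d] by (simp add: d_def)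
  have q2: "(norm (z' - y))\<^sup>2 = (norm (z' - w))\<^sup>2 - 2 * ((z' - w) \<bullet> d) + (norm d)\<^sup>2"
    using norm_diff_sq[of "z' - w" d] by (simp add: d_def)
  have v: "((1/\<mu>) *\<^sub>R (w - z)) \<bullet> d = - ((z - w) \<bullet> d) / \<mu>"
    by (simp add: inner_diff_left)
  have up: "moreau_env \<mu> g y - moreau_env \<mu> g w - ((1/\<mu>) *\<^sub>R (w - z)) \<bullet> d \<le> (norm d)\<^sup>2 / (2*\<mu>)"
    using m1 ew q1 v mu by (simp add: field_simps)
  have low0: "moreau_env \<mu> g y - moreau_env \<mu> g w - ((1/\<mu>) *\<^sub>R (w - z)) \<bullet> d
      \<ge> ((z - z') \<bullet> d) / \<mu> + (norm d)\<^sup>2 / (2*\<mu>)"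
  proof -
    have h1: "moreau_env \<mu> g y - moreau_env \<mu> g w \<ge> ((norm (z' - y))\<^sup>2 - (norm (z' - w))\<^sup>2) / (2*\<mu>)"
      using m2 ey by (simp add: diff_divide_distrib)
    have h3: "(z - z') \<bullet> d = (z - w) \<bullet> d - (z' - w) \<bullet> d" by (simp add: inner_diff_left)
    have h4: "((norm (z' - y))\<^sup>2 - (norm (z' - w))\<^sup>2) / (2*\<mu>) - ((1/\<mu>) *\<^sub>R (w - z)) \<bullet> d
        = ((z - z') \<bullet> d) / \<mu> + (norm d)\<^sup>2 / (2*\<mu>)"
      unfolding q2 v h3 using mu by (simp add: field_simps)
    show ?thesis using h1 h4 by linarith
  qed
  have "- ((z - z') \<bullet> d) \<le> norm (z - z') * norm d"
    using norm_cauchy_schwarz[of "z' - z" d] by (simp add: inner_diff_left norm_minus_commute)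
  also have "\<dots> \<le> (2 * norm d) * norm d"
    using pg_lip[OF lip Lg mu eta cvx, of w y] by (intro mult_right_mono) (auto simp: z_def z'_def d_def norm_minus_commute)
  finally have X: "- ((z - z') \<bullet> d) \<le> 2 * norm d * norm d" .
  have "- ((z - z') \<bullet> d) / \<mu> \<le> 2 * (norm d)\<^sup>2 / \<mu>"
    using divide_right_mono[OF X, of \<mu>] mu by (simp add: power2_eq_square mult.assoc)
  moreover have "2 * (norm d)\<^sup>2 / \<mu> \<le> 3 * (norm d)\<^sup>2 / \<mu>"
    using mu by (intro divide_right_mono) auto
  moreover have "0 \<le> (norm d)\<^sup>2 / (2*\<mu>)" using mu by simp
  moreover have "(norm d)\<^sup>2 / (2*\<mu>) \<le> 3 * (norm d)\<^sup>2 / \<mu>"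
    using mu by (simp add: field_simps)
  ultimately have "\<bar>moreau_env \<mu> g y - moreau_env \<mu> g w - ((1/\<mu>) *\<^sub>R (w - z)) \<bullet> d\<bar> \<le> 3 * (norm d)\<^sup>2 / \<mu>"
    using low0 up by (simp only: abs_le_iff) linarith
  thus ?thesis by (simp add: z_def d_def)
qed

lemma moreau_deriv:
  fixes g :: "'z::euclidean_space \<Rightarrow> real"
  assumes lip: "lipschitz_on Lg UNIV g" and Lg: "Lg \<ge> 0" and mu: "\<mu> > 0" "\<mu> \<le> 1 / (2 * \<eta>)"
    and eta: "\<eta> > 0" and cvx: "convex_on UNIV (\<lambda>z. g z + \<eta> / 2 * (norm z)\<^sup>2)"
  shows "(moreau_env \<mu> g has_derivative (\<lambda>u. ((1/\<mu>) *\<^sub>R (w - pg \<mu> g w)) \<bullet> u)) (at w)"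
  unfolding has_derivative_iff_norm
proof (intro conjI)
  show "bounded_linear (\<lambda>u. ((1/\<mu>) *\<^sub>R (w - pg \<mu> g w)) \<bullet> u)" by (rule bounded_linear_inner_right)
  show "((\<lambda>y. norm (moreau_env \<mu> g y - moreau_env \<mu> g w - ((1/\<mu>) *\<^sub>R (w - pg \<mu> g w)) \<bullet> (y - w)) / norm (y - w)) \<longlongrightarrow> 0) (at w)"
  proof (rule Lim_null_comparison)
    show "\<forall>\<^sub>F y in at w. norm (norm (moreau_env \<mu> g y - moreau_env \<mu> g w - ((1/\<mu>) *\<^sub>R (w - pg \<mu> g w)) \<bullet> (y - w)) / norm (y - w)) \<le> 3 / \<mu> * norm (y - w)"
    proof (rule always_eventually, rule allI)
      fix y
      have b: "\<bar>moreau_env \<mu> g y - moreau_env \<mu> g w - ((1/\<mu>) *\<^sub>R (w - pg \<mu> g w)) \<bullet> (y - w)\<bar> \<le> 3 / \<mu> * norm (y - w) * norm (y - w)"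
        using moreau_bound[OF lip Lg mu eta cvx, of y w] by (simp add: power2_eq_square)
      show "norm (norm (moreau_env \<mu> g y - moreau_env \<mu> g w - ((1/\<mu>) *\<^sub>R (w - pg \<mu> g w)) \<bullet> (y - w)) / norm (y - w)) \<le> 3 / \<mu> * norm (y - w)"
      proof (cases "y = w")
        case True thus ?thesis by simp
      next
        case False hence "norm (y - w) > 0" by simp
        thus ?thesis using b by (simp add: divide_le_eq)
      qed
    qed
    show "((\<lambda>y. 3 / \<mu> * norm (y - w)) \<longlongrightarrow> 0) (at w)"
      by (intro tendsto_eq_intros) auto
  qed
qed

lemma lsc_seq:
  assumes lsc: "lsc_fun \<phi>" and s: "s \<longlonglongrightarrow> x" and c: "ereal c < \<phi> x"
  shows "eventually (\<lambda>k. ereal c < \<phi> (s k)) sequentially"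
proof -
  have "\<phi> x \<le> Liminf (at x) \<phi>" using lsc unfolding lsc_fun_def by blast
  hence "\<forall>\<^sub>F y in at x. ereal c < \<phi> y" using c le_Liminf_iff by blast
  then obtain S where S: "open S" "x \<in> S" "\<forall>y\<in>S. y \<noteq> x \<longrightarrow> ereal c < \<phi> y"
    unfolding eventually_at_topological by auto
  have "eventually (\<lambda>k. s k \<in> S) sequentially" using topological_tendstoD[OF s S(1,2)] .
  thus ?thesis by eventually_elim (use S c in auto)
qed

lemma ereal_real_below:
  assumes "X \<noteq> -\<infinity>" shows "\<exists>c. ereal c < X"
proof (cases X)
  case (real r) thus ?thesis by (intro exI[of _ "r - 1"]) auto
qed (use assms in auto)

lemma lsc_bdd_below_compact:
  fixes \<phi> :: "'a::metric_space \<Rightarrow> ereal"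
  assumes proper: "proper_fun \<phi>" and lsc: "lsc_fun \<phi>" and K: "compact K"
  shows "\<exists>m::real. \<forall>y\<in>K. ereal m \<le> \<phi> y"
proof (rule ccontr)
  assume "\<not> ?thesis"
  hence "\<forall>n::nat. \<exists>y\<in>K. \<phi> y < ereal (- real n)" by (meson not_le)
  then obtain ys where ys: "\<And>n. ys n \<in> K" "\<And>n. \<phi> (ys n) < ereal (- real n)" by metis
  obtain l r where l: "l \<in> K" "strict_mono r" "(ys \<circ> r) \<longlonglongrightarrow> l"
    using K ys(1) unfolding compact_def by metis
  have "\<phi> l \<noteq> -\<infinity>" using proper unfolding proper_fun_def by blast
  then obtain c where c: "ereal c < \<phi> l" using ereal_real_below by blast
  have ev: "eventually (\<lambda>k. ereal c < \<phi> ((ys \<circ> r) k)) sequentially"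
    by (rule lsc_seq[OF lsc l(3) c])
  then obtain N where N: "\<And>k. k \<ge> N \<Longrightarrow> ereal c < \<phi> (ys (r k))"
    unfolding eventually_sequentially by auto
  define k where "k = max N (nat \<lceil>\<bar>c\<bar>\<rceil> + 1)"
  have Nk: "N \<le> k" by (simp add: k_def)
  have "ereal c < ereal (- real (r k))" using less_trans[OF N[OF Nk] ys(2)[of "r k"]] .
  hence "c < - real (r k)" by simp
  moreover have "k \<le> r k" using seq_suble[OF l(2)] by simp
  moreover have "real k > \<bar>c\<bar>" unfolding k_def by linarith
  ultimately show False by linarith
qed

lemma proper_lower_bound:
  fixes \<phi> :: "'a::euclidean_space \<Rightarrow> ereal"
  assumes proper: "proper_fun \<phi>" and lsc: "lsc_fun \<phi>" and cvx: "econvex_fun \<phi>"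
  shows "\<exists>b K x0. K \<ge> 0 \<and> \<phi> x0 < \<infinity> \<and> (\<forall>y. ereal (b - K * norm (y - x0)) \<le> \<phi> y)"
proof -
  obtain x0 where x0: "\<phi> x0 < \<infinity>" using proper unfolding proper_fun_def by blast
  have "\<phi> x0 \<noteq> -\<infinity>" using proper unfolding proper_fun_def by blast
  then obtain a where a: "\<phi> x0 = ereal a" using x0 by (cases "\<phi> x0") auto
  obtain m where m: "\<And>y. y \<in> cball x0 1 \<Longrightarrow> ereal m \<le> \<phi> y"
    using lsc_bdd_below_compact[OF proper lsc compact_cball] by blast
  define b where "b = min m a"
  define K where "K = \<bar>m - a\<bar>"
  have "ereal (b - K * norm (y - x0)) \<le> \<phi> y" for y
  proof (cases "norm (y - x0) \<le> 1")
    case True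
    hence "ereal m \<le> \<phi> y" using m by (simp add: dist_norm norm_minus_commute)
    moreover have "b - K * norm (y - x0) \<le> m"
    proof -
      have "0 \<le> K * norm (y - x0)" by (simp add: K_def)
      moreover have "b \<le> m" by (simp add: b_def)
      ultimately show ?thesis by linarith
    qed
    ultimately show ?thesis by (meson ereal_less_eq(3) order_trans)
  next
    case False
    define \<rho> where "\<rho> = norm (y - x0)"
    have rho: "\<rho> > 1" using False by (simp add: \<rho>_def)
    define t where "t = 1 / \<rho>"
    have t: "0 < t" "t \<le> 1" using rho by (auto simp: t_def)
    define zz where "zz = (1 - t) *\<^sub>R x0 + t *\<^sub>R y"
    have "zz - x0 = t *\<^sub>R (y - x0)" by (simp add: zz_def algebra_simps)
    hence "norm (zz - x0) = 1" using rho by (auto simp: t_def \<rho>_def)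
    hence "ereal m \<le> \<phi> zz" using m by (simp add: dist_norm norm_minus_commute)
    also have "\<phi> zz \<le> ereal (1 - t) * \<phi> x0 + ereal t * \<phi> y"
      using cvx t unfolding econvex_fun_def zz_def by auto
    finally have mz: "ereal m \<le> ereal (1 - t) * ereal a + ereal t * \<phi> y" unfolding a .
    show ?thesis
    proof (cases "\<phi> y")
      case (real q)
      have "m \<le> (1 - t) * a + t * q" using mz real by simp
      hence "\<rho> * m \<le> \<rho> * ((1 - t) * a + t * q)" using rho by (intro mult_left_mono) auto
      moreover have "\<rho> * t = 1" using rho by (simp add: t_def)
      moreover have "\<rho> * ((1 - t) * a + t * q) = \<rho> * a - (\<rho> * t) * a + (\<rho> * t) * q"
        by (simp add: algebra_simps)
      ultimately have "\<rho> * m \<le> (\<rho> - 1) * a + q" by (simp add: algebra_simps)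
      hence "q \<ge> \<rho> * (m - a) + a" by (simp add: algebra_simps)
      moreover have "\<rho> * (- K) \<le> \<rho> * (m - a)" using rho by (intro mult_left_mono) (auto simp: K_def)
      hence "\<rho> * (m - a) \<ge> - (\<rho> * K)" by simp
      ultimately have "b - K * \<rho> \<le> q" unfolding b_def by (simp add: algebra_simps min_le_iff_disj)
      thus ?thesis using real by (simp add: \<rho>_def)
    next
      case PInf thus ?thesis by simp
    next
      case MInf thus ?thesis using proper unfolding proper_fun_def by blast
    qed
  qed
  moreover have "K \<ge> 0" by (simp add: K_def)
  ultimately show ?thesis using x0 by blast
qed


lemma ereal_add_less: "ereal a < X \<Longrightarrow> ereal (a + b) < X + ereal b"
  by (cases X) auto

lemma lsc_seq_plus:
  fixes f :: "'a::metric_space \<Rightarrow> real"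
  assumes lsc: "lsc_fun \<phi>" and proper: "proper_fun \<phi>" and cf: "continuous_on UNIV f"
    and s: "s \<longlonglongrightarrow> x" and c: "ereal c < \<phi> x + ereal (f x)"
  shows "eventually (\<lambda>k. ereal c < \<phi> (s k) + ereal (f (s k))) sequentially"
proof -
  have ninf: "\<phi> x \<noteq> -\<infinity>" using proper unfolding proper_fun_def by blast
  obtain \<epsilon> where e: "\<epsilon> > 0" "ereal (c - f x + \<epsilon>) < \<phi> x"
  proof (cases "\<phi> x")
    case (real r)
    hence "c < r + f x" using c by simp
    hence "c - f x + (r + f x - c)/2 < r" by (simp add: field_simps)
    moreover have "(r + f x - c)/2 > 0" using \<open>c < r + f x\<close> by simp
    ultimately show ?thesis using that[of "(r + f x - c)/2"] real by simp
  next
    case PInf thus ?thesis using that[of 1] by simp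
  qed (use ninf in simp)
  have ev1: "eventually (\<lambda>k. ereal (c - f x + \<epsilon>) < \<phi> (s k)) sequentially"
    by (rule lsc_seq[OF lsc s e(2)])
  have "isCont f x" using cf by (simp add: continuous_on_eq_continuous_at)
  hence "(\<lambda>k. f (s k)) \<longlonglongrightarrow> f x" using isCont_tendsto_compose s by blast
  hence ev2: "eventually (\<lambda>k. f x - \<epsilon> < f (s k)) sequentially"
    using e(1) by (intro order_tendstoD(1)) auto
  show ?thesis using ev1 ev2
  proof eventually_elim
    case (elim k)
    have "ereal (c - f x + \<epsilon> + f (s k)) < \<phi> (s k) + ereal (f (s k))"
      by (rule ereal_add_less[OF elim(1)])
    moreover have "c \<le> c - f x + \<epsilon> + f (s k)" using elim(2) by simp
    ultimately show ?case by (meson ereal_less_eq(3) order_le_less_trans)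
  qed
qed

lemma prox_exists:
  fixes \<phi> :: "'a::euclidean_space \<Rightarrow> ereal"
  assumes proper: "proper_fun \<phi>" and lsc: "lsc_fun \<phi>" and cvx: "econvex_fun \<phi>" and gam: "\<gamma> > 0"
  shows "\<exists>p. \<forall>y. \<phi> p + ereal ((norm (p - w))\<^sup>2 / (2 * \<gamma>)) \<le> \<phi> y + ereal ((norm (y - w))\<^sup>2 / (2 * \<gamma>))"
proof -
  define \<Phi> where "\<Phi> y = \<phi> y + ereal ((norm (y - w))\<^sup>2 / (2 * \<gamma>))" for y
  obtain b K x0 where bK: "K \<ge> 0" "\<phi> x0 < \<infinity>" "\<And>y. ereal (b - K * norm (y - x0)) \<le> \<phi> y"
    using proper_lower_bound[OF proper lsc cvx] by blast
  have "\<phi> x0 \<noteq> -\<infinity>" using proper unfolding proper_fun_def by blast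
  then obtain a where a: "\<phi> x0 = ereal a" using bK(2) by (cases "\<phi> x0") auto
  define q where "q = norm (x0 - w)"
  define V0 where "V0 = a + q\<^sup>2 / (2 * \<gamma>)"
  have PhiV0: "\<Phi> x0 = ereal V0" by (simp add: \<Phi>_def a V0_def q_def)
  define R where "R = 4 * \<gamma> * (K + 1) + \<bar>V0\<bar> + \<bar>b\<bar> + q\<^sup>2 / (2 * \<gamma>) + 1"
  have R0: "R \<ge> 0" using gam bK(1) by (simp add: R_def)
  have lowPhi: "ereal (b - K * norm (y - x0) + (norm (y - w))\<^sup>2 / (2 * \<gamma>)) \<le> \<Phi> y" for y
  proof -
    have "ereal (b - K * norm (y - x0) + (norm (y - w))\<^sup>2 / (2 * \<gamma>))
        = ereal (b - K * norm (y - x0)) + ereal ((norm (y - w))\<^sup>2 / (2 * \<gamma>))" by simp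
    also have "\<dots> \<le> \<Phi> y" unfolding \<Phi>_def by (intro add_right_mono bK(3))
    finally show ?thesis .
  qed
  have far: "ereal V0 < \<Phi> y" if y: "norm (y - x0) > R" for y
  proof -
    define \<rho> where "\<rho> = norm (y - x0)"
    define u where "u = norm (y - w)"
    have "\<rho> \<le> u + q" unfolding \<rho>_def u_def q_def
      using norm_triangle_ineq[of "y - w" "w - x0"] by (simp add: norm_minus_commute)
    moreover have "\<rho> \<ge> 0" by (simp add: \<rho>_def)
    ultimately have "\<rho>\<^sup>2 \<le> (u + q)\<^sup>2" by (simp add: power_mono)
    also have "\<dots> \<le> 2 * u\<^sup>2 + 2 * q\<^sup>2" 
      using zero_le_power2[of "u - q"] by (simp add: power2_eq_square algebra_simps)
    finally have "\<rho>\<^sup>2 / (4 * \<gamma>) \<le> (2 * u\<^sup>2 + 2 * q\<^sup>2) / (4 * \<gamma>)"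
      using gam by (intro divide_right_mono) auto
    moreover have "(2 * u\<^sup>2 + 2 * q\<^sup>2) / (4 * \<gamma>) = u\<^sup>2 / (2 * \<gamma>) + q\<^sup>2 / (2 * \<gamma>)"
      using gam by (simp add: field_simps)
    ultimately have r1: "u\<^sup>2 / (2 * \<gamma>) \<ge> \<rho>\<^sup>2 / (4 * \<gamma>) - q\<^sup>2 / (2 * \<gamma>)" by linarith
    have "0 \<le> q\<^sup>2 / (2 * \<gamma>)" using gam by simp
    hence "\<rho> \<ge> 4 * \<gamma> * (K + 1)" using y unfolding \<rho>_def R_def by linarith
    hence "\<rho> / (4 * \<gamma>) \<ge> K + 1" using gam by (simp add: field_simps)
    hence "\<rho> * (\<rho> / (4 * \<gamma>)) \<ge> \<rho> * (K + 1)" using \<open>\<rho> \<ge> 0\<close> by (intro mult_left_mono) auto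
    hence r2: "\<rho>\<^sup>2 / (4 * \<gamma>) \<ge> (K + 1) * \<rho>" by (simp add: power2_eq_square algebra_simps)
    have "b - K * \<rho> + u\<^sup>2 / (2 * \<gamma>) \<ge> b + \<rho> - q\<^sup>2 / (2 * \<gamma>)"
      using r1 r2 by (simp add: algebra_simps)
    moreover have "\<rho> > R" using y by (simp add: \<rho>_def)
    moreover have "b + R - q\<^sup>2 / (2 * \<gamma>) > V0"
    proof -
      have "0 \<le> 4 * \<gamma> * (K + 1)" using gam bK(1) by simp
      moreover have "V0 \<le> \<bar>V0\<bar>" "0 \<le> b + \<bar>b\<bar>" by auto
      ultimately show ?thesis unfolding R_def by linarith
    qed
    ultimately have "V0 < b - K * \<rho> + u\<^sup>2 / (2 * \<gamma>)" by linarith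
    hence "ereal V0 < ereal (b - K * norm (y - x0) + (norm (y - w))\<^sup>2 / (2 * \<gamma>))"
      unfolding \<rho>_def u_def by simp
    thus ?thesis using lowPhi[of y] by (rule order_less_le_trans)
  qed
  define C where "C = cball x0 R"
  have x0C: "x0 \<in> C" using R0 by (simp add: C_def)
  have lowC: "ereal (b - K * R) \<le> \<Phi> y" if "y \<in> C" for y
  proof -
    have "norm (y - x0) \<le> R" using that by (simp add: C_def dist_norm norm_minus_commute)
    hence "K * norm (y - x0) \<le> K * R" using bK(1) by (intro mult_left_mono) auto
    moreover have "0 \<le> (norm (y - w))\<^sup>2 / (2 * \<gamma>)" using gam by simp
    ultimately have "b - K * R \<le> b - K * norm (y - x0) + (norm (y - w))\<^sup>2 / (2 * \<gamma>)" by linarith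
    thus ?thesis using lowPhi[of y] by (meson ereal_less_eq(3) order_trans)
  qed
  define I where "I = (INF y\<in>C. \<Phi> y)"
  have IV0: "I \<le> ereal V0" unfolding I_def using x0C PhiV0 by (metis INF_lower)
  have Ilow: "ereal (b - K * R) \<le> I" unfolding I_def by (rule INF_greatest) (rule lowC)
  obtain i where i: "I = ereal i" using IV0 Ilow by (cases I) auto
  have "\<forall>n::nat. \<exists>y\<in>C. \<Phi> y < ereal (i + 1 / (real n + 1))"
  proof
    fix n :: nat
    have "I < ereal (i + 1 / (real n + 1))" using i by simp
    thus "\<exists>y\<in>C. \<Phi> y < ereal (i + 1 / (real n + 1))" unfolding I_def by (simp add: INF_less_iff)
  qed
  then obtain ys where ys: "\<And>n. ys n \<in> C" "\<And>n. \<Phi> (ys n) < ereal (i + 1 / (real n + 1))" by metis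
  obtain l r where l: "l \<in> C" "strict_mono r" "(ys \<circ> r) \<longlonglongrightarrow> l"
    using compact_cball ys(1) unfolding compact_def C_def by metis
  have cf: "continuous_on UNIV (\<lambda>y. (norm (y - w))\<^sup>2 / (2 * \<gamma>))" using gam by (intro continuous_intros) auto
  have lI: "\<Phi> l \<le> ereal i"
  proof (rule ccontr)
    assume "\<not> \<Phi> l \<le> ereal i"
    hence lt: "ereal i < \<Phi> l" by simp
    obtain c where c: "i < c" "ereal c < \<Phi> l"
    proof (cases "\<Phi> l")
      case (real r) thus ?thesis using that[of "(i + r)/2"] lt by simp
    next
      case PInf thus ?thesis using that[of "i + 1"] by simp
    next
      case MInf thus ?thesis using lt by simp
    qed
    have ev: "eventually (\<lambda>k. ereal c < \<Phi> ((ys \<circ> r) k)) sequentially"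
      unfolding \<Phi>_def by (rule lsc_seq_plus[OF lsc proper cf l(3)]) (use c(2) in \<open>simp add: \<Phi>_def\<close>)
    then obtain N where N: "\<And>k. k \<ge> N \<Longrightarrow> ereal c < \<Phi> (ys (r k))"
      unfolding eventually_sequentially by auto
    obtain n :: nat where n: "1 / (c - i) < real n" using reals_Archimedean2 by blast
    define k where "k = max N n"
    have Nk: "N \<le> k" by (simp add: k_def)
    have "ereal c < ereal (i + 1 / (real (r k) + 1))" using less_trans[OF N[OF Nk] ys(2)[of "r k"]] .
    hence c1: "c < i + 1 / (real (r k) + 1)" by simp
    have "real k \<le> real (r k)" using seq_suble[OF l(2)] by simp
    hence c2: "1 / (real (r k) + 1) \<le> 1 / (real k + 1)" by (intro divide_left_mono) auto
    have "1 / (c - i) < real k + 1" using n by (simp add: k_def)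
    hence "1 < (real k + 1) * (c - i)" using c(1) by (simp add: field_simps)
    hence c3: "1 / (real k + 1) < c - i" by (simp add: field_simps)
    show False using c1 c2 c3 by linarith
  qed
  have "\<Phi> l \<le> \<Phi> y" for y
  proof (cases "y \<in> C")
    case True
    have "I \<le> \<Phi> y" unfolding I_def using True by (rule INF_lower)
    thus ?thesis using lI i by simp
  next
    case False
    hence "norm (y - x0) > R" by (simp add: C_def dist_norm norm_minus_commute)
    hence "ereal V0 < \<Phi> y" by (rule far)
    moreover have "i \<le> V0" using IV0 i by simp
    ultimately show ?thesis using lI by (meson ereal_less_eq(3) order_trans less_imp_le)
  qed
  thus ?thesis unfolding \<Phi>_def by blast
qed

lemma parallelogram_mid:
  fixes p q w :: "'a::real_inner"
  shows "(norm ((1 - 1/2) *\<^sub>R p + (1/2) *\<^sub>R q - w))\<^sup>2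
       = ((norm (p - w))\<^sup>2 + (norm (q - w))\<^sup>2) / 2 - (norm (p - q))\<^sup>2 / 4"
proof -
  have hw: "(1/2::real) *\<^sub>R w + (1/2) *\<^sub>R w = w"
    by (metis scaleR_add_left field_sum_of_halves scaleR_one)
  have e1: "(1 - 1/2) *\<^sub>R p + (1/2) *\<^sub>R q - w = (1/2) *\<^sub>R ((p - w) + (q - w))"
    using hw by (simp add: algebra_simps)
  have e2: "p - q = (p - w) - (q - w)" by simp
  show ?thesis unfolding e1 e2
    by (simp add: power2_norm_eq_inner inner_add_left inner_add_right inner_diff_left inner_diff_right
        inner_commute field_simps)
qed

lemma prox_unique:
  fixes \<phi> :: "'a::euclidean_space \<Rightarrow> ereal"
  assumes proper: "proper_fun \<phi>" and lsc: "lsc_fun \<phi>" and cvx: "econvex_fun \<phi>" and gam: "\<gamma> > 0"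
  shows "\<exists>!p. \<forall>y. \<phi> p + ereal ((norm (p - w))\<^sup>2 / (2 * \<gamma>)) \<le> \<phi> y + ereal ((norm (y - w))\<^sup>2 / (2 * \<gamma>))"
proof (rule ex_ex1I)
  show "\<exists>p. \<forall>y. \<phi> p + ereal ((norm (p - w))\<^sup>2 / (2 * \<gamma>)) \<le> \<phi> y + ereal ((norm (y - w))\<^sup>2 / (2 * \<gamma>))"
    by (rule prox_exists[OF assms])
next
  fix p q
  assume hp: "\<forall>y. \<phi> p + ereal ((norm (p - w))\<^sup>2 / (2 * \<gamma>)) \<le> \<phi> y + ereal ((norm (y - w))\<^sup>2 / (2 * \<gamma>))"
     and hq: "\<forall>y. \<phi> q + ereal ((norm (q - w))\<^sup>2 / (2 * \<gamma>)) \<le> \<phi> y + ereal ((norm (y - w))\<^sup>2 / (2 * \<gamma>))"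
  obtain x0 where x0: "\<phi> x0 < \<infinity>" using proper unfolding proper_fun_def by blast
  have ninf: "\<And>y. \<phi> y \<noteq> -\<infinity>" using proper unfolding proper_fun_def by blast
  have fin: "\<exists>P. \<phi> r = ereal P" if hr: "\<forall>y. \<phi> r + ereal ((norm (r - w))\<^sup>2 / (2 * \<gamma>)) \<le> \<phi> y + ereal ((norm (y - w))\<^sup>2 / (2 * \<gamma>))" for r
  proof -
    have "\<phi> r + ereal ((norm (r - w))\<^sup>2 / (2 * \<gamma>)) \<le> \<phi> x0 + ereal ((norm (x0 - w))\<^sup>2 / (2 * \<gamma>))"
      using hr by blast
    moreover have "\<phi> x0 + ereal ((norm (x0 - w))\<^sup>2 / (2 * \<gamma>)) < \<infinity>" using x0 by simp
    ultimately have "\<phi> r \<noteq> \<infinity>" by auto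
    thus ?thesis using ninf[of r] by (cases "\<phi> r") auto
  qed
  obtain P where P: "\<phi> p = ereal P" using fin[OF hp] by blast
  obtain Q where Q: "\<phi> q = ereal Q" using fin[OF hq] by blast
  define A where "A = (norm (p - w))\<^sup>2 / (2 * \<gamma>)"
  define B where "B = (norm (q - w))\<^sup>2 / (2 * \<gamma>)"
  define mid where "mid = (1 - 1/2) *\<^sub>R p + (1/2::real) *\<^sub>R q"
  define M where "M = (norm (mid - w))\<^sup>2 / (2 * \<gamma>)"
  have "P + A \<le> Q + B" using hp[rule_format, of q] by (simp add: P Q A_def B_def)
  moreover have "Q + B \<le> P + A" using hq[rule_format, of p] by (simp add: P Q A_def B_def)
  ultimately have PQ: "P + A = Q + B" by simp
  have "\<phi> mid \<le> ereal (1 - 1/2) * \<phi> p + ereal (1/2) * \<phi> q"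
    using cvx[unfolded econvex_fun_def, rule_format, of "1/2" p q] unfolding mid_def by simp
  hence pm: "\<phi> mid \<le> ereal (P/2 + Q/2)" by (simp add: P Q)
  have "ereal (P + A) \<le> \<phi> mid + ereal M" using hp[rule_format, of mid] by (simp add: P A_def M_def)
  also have "\<dots> \<le> ereal (P/2 + Q/2) + ereal M" by (intro add_right_mono pm)
  finally have ineq: "P + A \<le> P/2 + Q/2 + M" by simp
  have "M = (A + B) / 2 - (norm (p - q))\<^sup>2 / (8 * \<gamma>)"
    unfolding M_def A_def B_def mid_def parallelogram_mid using gam by (simp add: field_simps)
  hence "(norm (p - q))\<^sup>2 / (8 * \<gamma>) \<le> 0" using ineq PQ by (simp add: field_simps)
  hence "(norm (p - q))\<^sup>2 \<le> 0" using gam by (simp add: divide_le_0_iff)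
  thus "p = q" by simp
qed

lemma prox_min:
  fixes \<phi> :: "'a::euclidean_space \<Rightarrow> ereal"
  assumes proper: "proper_fun \<phi>" and lsc: "lsc_fun \<phi>" and cvx: "econvex_fun \<phi>" and gam: "\<gamma> > 0"
  shows "\<phi> (prox \<gamma> \<phi> w) + ereal ((norm (prox \<gamma> \<phi> w - w))\<^sup>2 / (2 * \<gamma>)) \<le> \<phi> y + ereal ((norm (y - w))\<^sup>2 / (2 * \<gamma>))"
  using theI'[OF prox_unique[OF assms, of w]] unfolding prox_def by blast

lemma prox_fin:
  fixes \<phi> :: "'a::euclidean_space \<Rightarrow> ereal"
  assumes proper: "proper_fun \<phi>" and lsc: "lsc_fun \<phi>" and cvx: "econvex_fun \<phi>" and gam: "\<gamma> > 0"
  shows "\<exists>P. \<phi> (prox \<gamma> \<phi> w) = ereal P"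
proof -
  obtain x0 where x0: "\<phi> x0 < \<infinity>" using proper unfolding proper_fun_def by blast
  have ninf: "\<And>y. \<phi> y \<noteq> -\<infinity>" using proper unfolding proper_fun_def by blast
  have "\<phi> (prox \<gamma> \<phi> w) + ereal ((norm (prox \<gamma> \<phi> w - w))\<^sup>2 / (2 * \<gamma>)) \<le> \<phi> x0 + ereal ((norm (x0 - w))\<^sup>2 / (2 * \<gamma>))"
    by (rule prox_min[OF assms])
  moreover have "\<phi> x0 + ereal ((norm (x0 - w))\<^sup>2 / (2 * \<gamma>)) < \<infinity>" using x0 by simp
  ultimately have "\<phi> (prox \<gamma> \<phi> w) \<noteq> \<infinity>" by auto
  thus ?thesis using ninf[of "prox \<gamma> \<phi> w"] by (cases "\<phi> (prox \<gamma> \<phi> w)") auto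
qed

lemma prox_ineq:
  fixes \<phi> :: "'a::euclidean_space \<Rightarrow> ereal"
  assumes proper: "proper_fun \<phi>" and lsc: "lsc_fun \<phi>" and cvx: "econvex_fun \<phi>" and gam: "\<gamma> > 0"
  shows "\<phi> (prox \<gamma> \<phi> w) + ereal (((1/\<gamma>) *\<^sub>R (w - prox \<gamma> \<phi> w)) \<bullet> (y - prox \<gamma> \<phi> w)) \<le> \<phi> y"
proof -
  define p where "p = prox \<gamma> \<phi> w"
  obtain P where P: "\<phi> p = ereal P" using prox_fin[OF assms] unfolding p_def by blast
  have pmin: "\<And>y. \<phi> p + ereal ((norm (p - w))\<^sup>2 / (2 * \<gamma>)) \<le> \<phi> y + ereal ((norm (y - w))\<^sup>2 / (2 * \<gamma>))"
    unfolding p_def by (rule prox_min[OF assms])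
  have ninf: "\<And>y. \<phi> y \<noteq> -\<infinity>" using proper unfolding proper_fun_def by blast
  show ?thesis
  proof (cases "\<phi> y")
    case PInf thus ?thesis by (simp add: p_def[symmetric] P)
  next
    case MInf thus ?thesis using ninf by simp
  next
    case (real Y)
    define D where "D = y - p"
    have key: "P + ((w - p) \<bullet> D) / \<gamma> - t * ((norm D)\<^sup>2 / (2 * \<gamma>)) \<le> Y" if t: "0 < t" "t \<le> 1" for t
    proof -
      define yt where "yt = (1 - t) *\<^sub>R p + t *\<^sub>R y"
      have yt': "yt = p + t *\<^sub>R D" by (simp add: yt_def D_def algebra_simps)
      have "\<phi> yt \<le> ereal (1 - t) * \<phi> p + ereal t * \<phi> y"
        using cvx t unfolding econvex_fun_def yt_def by auto
      hence cy: "\<phi> yt \<le> ereal ((1 - t) * P + t * Y)" by (simp add: P real)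
      define Bt where "Bt = (norm (yt - w))\<^sup>2 / (2 * \<gamma>)"
      have Bt: "Bt = ((norm (p - w))\<^sup>2 + 2 * t * ((p - w) \<bullet> D) + t\<^sup>2 * (norm D)\<^sup>2) / (2 * \<gamma>)"
        unfolding Bt_def yt' by (simp add: norm_lin_sq)
      have "ereal (P + (norm (p - w))\<^sup>2 / (2 * \<gamma>)) \<le> \<phi> yt + ereal Bt"
        using pmin[of yt] by (simp add: P Bt_def)
      also have "\<dots> \<le> ereal ((1 - t) * P + t * Y) + ereal Bt" by (intro add_right_mono cy)
      finally have "P + (norm (p - w))\<^sup>2 / (2 * \<gamma>) \<le> (1 - t) * P + t * Y + Bt" by simp
      moreover have "Bt = (norm (p - w))\<^sup>2 / (2 * \<gamma>) + (2 * t * ((p - w) \<bullet> D) + t\<^sup>2 * (norm D)\<^sup>2) / (2 * \<gamma>)"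
        unfolding Bt by (simp add: add_divide_distrib)
      moreover have "(1 - t) * P = P - t * P" by (simp add: algebra_simps)
      ultimately have "t * P \<le> t * Y + (2 * t * ((p - w) \<bullet> D) + t\<^sup>2 * (norm D)\<^sup>2) / (2 * \<gamma>)"
        by linarith
      moreover have "t * (P + ((w - p) \<bullet> D) / \<gamma> - t * ((norm D)\<^sup>2 / (2 * \<gamma>)))
          = t * P - (2 * t * ((p - w) \<bullet> D) + t\<^sup>2 * (norm D)\<^sup>2) / (2 * \<gamma>)"
        using gam by (simp add: field_simps power2_eq_square inner_diff_left)
      ultimately have "t * (P + ((w - p) \<bullet> D) / \<gamma> - t * ((norm D)\<^sup>2 / (2 * \<gamma>))) \<le> t * Y"
        by linarith
      thus ?thesis using t by simp
    qed
    have "P + ((w - p) \<bullet> D) / \<gamma> \<le> Y" by (rule small_t_limit[OF key])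
    moreover have "((1/\<gamma>) *\<^sub>R (w - p)) \<bullet> D = ((w - p) \<bullet> D) / \<gamma>" by simp
    ultimately show ?thesis by (simp add: p_def[symmetric] P real D_def)
  qed
qed

lemma gradient_eq:
  fixes f :: "'a::euclidean_space \<Rightarrow> real"
  assumes "(f has_derivative (\<lambda>u. v \<bullet> u)) (at x)"
  shows "gradient f x = v"
  unfolding gradient_def
proof (rule the_equality)
  show "(f has_derivative (\<lambda>u. v \<bullet> u)) (at x)" by fact
next
  fix v' assume "(f has_derivative (\<lambda>u. v' \<bullet> u)) (at x)"
  hence eq: "(\<lambda>u. v' \<bullet> u) = (\<lambda>u. v \<bullet> u)" using has_derivative_unique assms by blast
  have "(v' - v) \<bullet> (v' - v) = 0" using fun_cong[OF eq, of "v' - v"] by (simp add: inner_diff_left)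
  thus "v' = v" by simp
qed

lemma gradient_has_derivative:
  fixes f :: "'a::euclidean_space \<Rightarrow> real"
  assumes "f differentiable (at x)"
  shows "(f has_derivative (\<lambda>u. gradient f x \<bullet> u)) (at x)"
proof -
  obtain D where D: "(f has_derivative D) (at x)" using assms unfolding differentiable_def by blast
  have lin: "linear D" using has_derivative_linear[OF D] .
  have "D = (\<lambda>u. adjoint D 1 \<bullet> u)"
  proof
    fix u show "D u = adjoint D 1 \<bullet> u" using adjoint_works[OF lin, of u 1] by (simp add: inner_commute)
  qed
  with D have D': "(f has_derivative (\<lambda>u. adjoint D 1 \<bullet> u)) (at x)" by simp
  thus ?thesis using gradient_eq[OF D'] by simp
qed

lemma gradient_Fn:
  fixes g :: "'z::euclidean_space \<Rightarrow> real" and h :: "'x::euclidean_space \<Rightarrow> real"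
  assumes lip: "lipschitz_on Lg UNIV g" and Lg: "Lg \<ge> 0" and mu: "\<mu> > 0" "\<mu> \<le> 1 / (2 * \<eta>)"
    and eta: "\<eta> > 0" and cvx: "convex_on UNIV (\<lambda>z. g z + \<eta> / 2 * (norm z)\<^sup>2)"
    and hd: "h differentiable (at x)"
    and Sd: "(S has_derivative blinfun_apply A) (at x)"
  shows "gradient (\<lambda>y. h y + moreau_env \<mu> g (S y)) x \<bullet> u
       = gradient h x \<bullet> u + (A u) \<bullet> ((1/\<mu>) *\<^sub>R (S x - pg \<mu> g (S x)))"
proof -
  define v where "v = (1/\<mu>) *\<^sub>R (S x - pg \<mu> g (S x))"
  have e: "(moreau_env \<mu> g has_derivative (\<lambda>u. v \<bullet> u)) (at (S x))"
    unfolding v_def by (rule moreau_deriv[OF lip Lg mu eta cvx])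
  have c: "((moreau_env \<mu> g \<circ> S) has_derivative ((\<lambda>u. v \<bullet> u) \<circ> blinfun_apply A)) (at x)"
    by (rule diff_chain_at[OF Sd e])
  have hh: "(h has_derivative (\<lambda>u. gradient h x \<bullet> u)) (at x)" by (rule gradient_has_derivative[OF hd])
  have lin: "linear (blinfun_apply A)" by (simp add: blinfun.bounded_linear_right bounded_linear.linear)
  have s: "((\<lambda>y. h y + (moreau_env \<mu> g \<circ> S) y) has_derivative
      (\<lambda>u. gradient h x \<bullet> u + ((\<lambda>u. v \<bullet> u) \<circ> blinfun_apply A) u)) (at x)"
    by (rule has_derivative_add[OF hh c])
  have "(\<lambda>u. gradient h x \<bullet> u + ((\<lambda>u. v \<bullet> u) \<circ> blinfun_apply A) u)
      = (\<lambda>u. (gradient h x + adjoint (blinfun_apply A) v) \<bullet> u)"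
  proof
    fix u
    show "gradient h x \<bullet> u + ((\<lambda>u. v \<bullet> u) \<circ> blinfun_apply A) u = (gradient h x + adjoint (blinfun_apply A) v) \<bullet> u"
    proof -
      have "(gradient h x + adjoint (blinfun_apply A) v) \<bullet> u = gradient h x \<bullet> u + adjoint (blinfun_apply A) v \<bullet> u"
        by (rule inner_add_left)
      also have "adjoint (blinfun_apply A) v \<bullet> u = v \<bullet> blinfun_apply A u"
        using adjoint_works[OF lin, of u v] by (simp add: inner_commute)
      finally show ?thesis by simp
    qed
  qed
  with s have "((\<lambda>y. h y + moreau_env \<mu> g (S y)) has_derivative
      (\<lambda>u. (gradient h x + adjoint (blinfun_apply A) v) \<bullet> u)) (at x)" by (simp add: o_def)
  hence "gradient (\<lambda>y. h y + moreau_env \<mu> g (S y)) x = gradient h x + adjoint (blinfun_apply A) v"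
    by (rule gradient_eq)
  moreover have "adjoint (blinfun_apply A) v \<bullet> u = v \<bullet> blinfun_apply A u"
    using adjoint_works[OF lin, of u v] by (simp add: inner_commute)
  ultimately show ?thesis by (simp add: v_def[symmetric] inner_add_left inner_add_right inner_commute)
qed

lemma lsc_lim_le:
  assumes lsc: "lsc_fun \<phi>" and p: "p \<longlonglongrightarrow> x" and le: "\<And>k. \<phi> (p k) \<le> ereal (c k)"
    and c: "c \<longlonglongrightarrow> c0"
  shows "\<phi> x \<le> ereal c0"
proof (rule ccontr)
  assume "\<not> \<phi> x \<le> ereal c0"
  hence lt: "ereal c0 < \<phi> x" by simp
  obtain c' where c': "c0 < c'" "ereal c' < \<phi> x"
  proof (cases "\<phi> x")
    case (real r)
    hence "c0 < r" using lt by simp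
    hence "c0 < (c0 + r)/2" "(c0 + r)/2 < r" by (simp_all add: field_simps)
    thus ?thesis using that[of "(c0 + r)/2"] real by simp
  next
    case PInf thus ?thesis using that[of "c0 + 1"] by simp
  next
    case MInf thus ?thesis using lt by simp
  qed
  have ev1: "eventually (\<lambda>k. ereal c' < \<phi> (p k)) sequentially" by (rule lsc_seq[OF lsc p c'(2)])
  have ev2: "eventually (\<lambda>k. c k < c') sequentially" using c c'(1) by (rule order_tendstoD(2))
  have "eventually (\<lambda>k. False) sequentially" using ev1 ev2
  proof eventually_elim
    case (elim k)
    have "ereal c' < ereal (c k)" using elim(1) le[of k] by (rule order_less_le_trans)
    thus False using elim(2) by simp
  qed
  thus False by simp
qed

lemma frechet_final:
  fixes \<phi> :: "'x::euclidean_space \<Rightarrow> ereal" and h :: "'x \<Rightarrow> real"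
    and S :: "'x \<Rightarrow> 'z::euclidean_space" and g :: "'z \<Rightarrow> real"
  assumes hd: "(h has_derivative (\<lambda>u. H \<bullet> u)) (at xs)"
    and Sd: "(S has_derivative blinfun_apply A) (at xs)"
    and phix: "\<phi> xs = ereal X"
    and PHI: "\<And>y. \<phi> xs + ereal (- (H \<bullet> (y - xs) + (blinfun_apply A (y - xs)) \<bullet> v)) \<le> \<phi> y"
    and GS: "\<And>z'. g (S xs) + v \<bullet> (z' - S xs) - \<eta> / 2 * (norm (z' - S xs))\<^sup>2 \<le> g z'"
    and eta: "\<eta> > 0"
  shows "0 \<in> frechet_subdiff (\<lambda>y. ereal (h y + g (S y)) + \<phi> y) xs"
proof -
  define J where "J = (\<lambda>y. ereal (h y + g (S y)) + \<phi> y)"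
  define n where "n y = norm (y - xs)" for y
  define R1 where "R1 y = h y - h xs - H \<bullet> (y - xs)" for y
  define R2 where "R2 y = S y - S xs - blinfun_apply A (y - xs)" for y
  define r where "r y = R1 y + v \<bullet> R2 y - \<eta> / 2 * (norm (S y - S xs))\<^sup>2" for y
  have Jxs: "J xs = ereal (h xs + g (S xs) + X)" by (simp add: J_def phix)
  have pw: "ereal (r y / n y) \<le> (J y - J xs - ereal (0 \<bullet> (y - xs))) / ereal (n y)" if "y \<noteq> xs" for y
  proof -
    have npos: "n y > 0" using that by (simp add: n_def)
    show ?thesis
    proof (cases "\<phi> y")
      case PInf
      thus ?thesis using npos by (simp add: J_def Jxs)
    next
      case MInf
      have "\<phi> xs + ereal (- (H \<bullet> (y - xs) + (blinfun_apply A (y - xs)) \<bullet> v)) \<le> \<phi> y" by (rule PHI)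
      thus ?thesis using MInf by (simp add: phix)
    next
      case (real Y)
      have "\<phi> xs + ereal (- (H \<bullet> (y - xs) + (blinfun_apply A (y - xs)) \<bullet> v)) \<le> \<phi> y" by (rule PHI)
      hence p1: "X - (H \<bullet> (y - xs) + (blinfun_apply A (y - xs)) \<bullet> v) \<le> Y" by (simp add: phix real)
      have p2: "g (S xs) + v \<bullet> (S y - S xs) - \<eta> / 2 * (norm (S y - S xs))\<^sup>2 \<le> g (S y)" by (rule GS)
      have "v \<bullet> R2 y = v \<bullet> (S y - S xs) - (blinfun_apply A (y - xs)) \<bullet> v"
        by (simp add: R2_def inner_diff_right inner_commute)
      hence "r y \<le> (h y + g (S y) + Y) - (h xs + g (S xs) + X)"
        using p1 p2 unfolding r_def R1_def by linarith
      hence "r y / n y \<le> ((h y + g (S y) + Y) - (h xs + g (S xs) + X)) / n y"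
        using npos by (intro divide_right_mono) auto
      moreover have "J y - J xs - ereal (0 \<bullet> (y - xs)) = ereal ((h y + g (S y) + Y) - (h xs + g (S xs) + X))"
        by (simp add: J_def phix real)
      ultimately show ?thesis using npos by (simp add: ereal_divide)
    qed
  qed
  have L1: "((\<lambda>y. R1 y / n y) \<longlongrightarrow> 0) (at xs)"
  proof (rule Lim_null_comparison)
    have "((\<lambda>y. norm (h y - h xs - H \<bullet> (y - xs)) / norm (y - xs)) \<longlongrightarrow> 0) (at xs)"
      using hd unfolding has_derivative_iff_norm by blast
    thus "((\<lambda>y. norm (h y - h xs - H \<bullet> (y - xs)) / norm (y - xs)) \<longlongrightarrow> 0) (at xs)" .
    show "\<forall>\<^sub>F y in at xs. norm (R1 y / n y) \<le> norm (h y - h xs - H \<bullet> (y - xs)) / norm (y - xs)"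
      by (simp add: R1_def n_def)
  qed
  have Q2: "((\<lambda>y. norm (R2 y) / n y) \<longlongrightarrow> 0) (at xs)"
    using Sd unfolding has_derivative_iff_norm R2_def n_def by blast
  have L2: "((\<lambda>y. v \<bullet> R2 y / n y) \<longlongrightarrow> 0) (at xs)"
  proof (rule Lim_null_comparison)
    show "((\<lambda>y. norm v * (norm (R2 y) / n y)) \<longlongrightarrow> 0) (at xs)"
      using tendsto_mult_right_zero[OF Q2] by simp
    show "\<forall>\<^sub>F y in at xs. norm (v \<bullet> R2 y / n y) \<le> norm v * (norm (R2 y) / n y)"
    proof (rule always_eventually, rule allI)
      fix y
      have "\<bar>v \<bullet> R2 y\<bar> \<le> norm v * norm (R2 y)" by (rule Cauchy_Schwarz_ineq2)
      thus "norm (v \<bullet> R2 y / n y) \<le> norm v * (norm (R2 y) / n y)"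
        by (simp add: n_def divide_right_mono)
    qed
  qed
  have Scont: "(S \<longlongrightarrow> S xs) (at xs)"
    using has_derivative_continuous[OF Sd] by (simp add: continuous_def)
  have Sn: "((\<lambda>y. norm (S y - S xs)) \<longlongrightarrow> 0) (at xs)"
    using Scont by (simp add: LIM_zero_iff tendsto_norm_zero_iff)
  have L3: "((\<lambda>y. \<eta> / 2 * (norm (S y - S xs))\<^sup>2 / n y) \<longlongrightarrow> 0) (at xs)"
  proof (rule Lim_null_comparison)
    show "((\<lambda>y. \<eta> / 2 * (norm A + 1) * norm (S y - S xs)) \<longlongrightarrow> 0) (at xs)"
      using tendsto_mult_right_zero[OF Sn, of "\<eta> / 2 * (norm A + 1)"] by simp
    have ev: "\<forall>\<^sub>F y in at xs. norm (R2 y) / n y < 1" using Q2 by (rule order_tendstoD) simp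
    have evn: "\<forall>\<^sub>F y in at xs. y \<noteq> xs" by (simp add: eventually_at_filter)
    show "\<forall>\<^sub>F y in at xs. norm (\<eta> / 2 * (norm (S y - S xs))\<^sup>2 / n y) \<le> \<eta> / 2 * (norm A + 1) * norm (S y - S xs)"
      using ev evn
    proof eventually_elim
      case (elim y)
      have npos: "n y > 0" using elim(2) by (simp add: n_def)
      have "S y - S xs = blinfun_apply A (y - xs) + R2 y" by (simp add: R2_def)
      hence "norm (S y - S xs) \<le> norm (blinfun_apply A (y - xs)) + norm (R2 y)"
        by (metis norm_triangle_ineq)
      also have "\<dots> \<le> norm A * n y + norm (R2 y)" using norm_blinfun[of A "y - xs"] by (simp add: n_def)
      also have "norm (R2 y) \<le> n y" using elim(1) npos by (simp add: divide_less_eq)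
      finally have b: "norm (S y - S xs) \<le> (norm A + 1) * n y" by (simp add: algebra_simps)
      have "(norm (S y - S xs))\<^sup>2 = norm (S y - S xs) * norm (S y - S xs)" by (simp add: power2_eq_square)
      also have "\<dots> \<le> norm (S y - S xs) * ((norm A + 1) * n y)" by (intro mult_left_mono b) simp
      finally have "(norm (S y - S xs))\<^sup>2 / n y \<le> (norm A + 1) * norm (S y - S xs)"
        using npos by (simp add: divide_le_eq algebra_simps)
      hence "\<eta> / 2 * ((norm (S y - S xs))\<^sup>2 / n y) \<le> \<eta> / 2 * ((norm A + 1) * norm (S y - S xs))"
        using eta by (intro mult_left_mono) auto
      thus ?case using eta npos by (simp add: abs_mult)
    qed
  qed
  have rlim: "((\<lambda>y. r y / n y) \<longlongrightarrow> 0) (at xs)"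
  proof -
    have "((\<lambda>y. R1 y / n y + v \<bullet> R2 y / n y - \<eta> / 2 * (norm (S y - S xs))\<^sup>2 / n y) \<longlongrightarrow> 0 + 0 - 0) (at xs)"
      by (intro tendsto_diff tendsto_add L1 L2 L3)
    thus ?thesis by (simp add: r_def add_divide_distrib diff_divide_distrib)
  qed
  have erlim: "((\<lambda>y. ereal (r y / n y)) \<longlongrightarrow> 0) (at xs)"
    using tendsto_ereal[OF rlim] by (simp add: zero_ereal_def)
  have "0 \<le> Liminf (at xs) (\<lambda>y. (J y - J xs - ereal (0 \<bullet> (y - xs))) / ereal (norm (y - xs)))"
    unfolding le_Liminf_iff
  proof (intro allI impI)
    fix c :: ereal assume c: "c < 0"
    have ev: "\<forall>\<^sub>F y in at xs. c < ereal (r y / n y)" using erlim c by (rule order_tendstoD)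
    have evn: "\<forall>\<^sub>F y in at xs. y \<noteq> xs" by (simp add: eventually_at_filter)
    show "\<forall>\<^sub>F y in at xs. c < (J y - J xs - ereal (0 \<bullet> (y - xs))) / ereal (norm (y - xs))"
      using ev evn
    proof eventually_elim
      case (elim y)
      show ?case using order_less_le_trans[OF elim(1) pw[OF elim(2)]] by (simp add: n_def)
    qed
  qed
  moreover have "\<bar>J xs\<bar> \<noteq> \<infinity>" by (simp add: Jxs)
  ultimately show ?thesis unfolding frechet_subdiff_def J_def by simp
qed

theorem theorem2:
  fixes \<phi> :: "'x::euclidean_space \<Rightarrow> ereal"
    and h :: "'x \<Rightarrow> real"
    and S :: "'x \<Rightarrow> 'z::euclidean_space"
    and DS :: "'x \<Rightarrow> ('x \<Rightarrow>\<^sub>L 'z)"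
    and g :: "'z \<Rightarrow> real"
    and Lg \<eta> L\<^sub>h c M w\<^sub>1 w\<^sub>2 \<beta> \<gamma>bar :: real
    and \<mu> \<gamma> :: "nat \<Rightarrow> real"
    and x :: "nat \<Rightarrow> 'x"
    and m :: "nat \<Rightarrow> nat"
    and xstar :: 'x
  defines "F \<equiv> (\<lambda>y. h y + g (S y))"
    and "Fn \<equiv> (\<lambda>n y. h y + moreau_env (\<mu> n) g (S y))"
  assumes phi_proper: "proper_fun \<phi>"
    and phi_lsc: "lsc_fun \<phi>"
    and phi_convex: "econvex_fun \<phi>"
    and h_diff: "\<And>y. h differentiable (at y)"
    and h_grad_lip: "lipschitz_on L\<^sub>h (edom \<phi>) (gradient h)"
    and S_deriv: "\<And>y. (S has_derivative blinfun_apply (DS y)) (at y)"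
    and S_C1: "continuous_on UNIV DS"
    and Lg_pos: "Lg > 0"
    and g_lip: "lipschitz_on Lg UNIV g"
    and eta_pos: "\<eta> > 0"
    and g_weakly_convex: "convex_on UNIV (\<lambda>z. g z + \<eta> / 2 * (norm z)\<^sup>2)"
    and argmin_nonempty: "\<exists>y. \<forall>w. ereal (F y) + \<phi> y \<le> ereal (F w) + \<phi> w"
    and x0_dom: "x 0 \<in> edom \<phi>"
    and c_bounds: "0 < c" "c < 1"
    and mu_bounds: "\<And>n. 0 < \<mu> n \<and> \<mu> n \<le> 1 / (2 * \<eta>)"
    and mu_lim: "\<mu> \<longlonglongrightarrow> 0"
    and mu_not_summable: "\<not> summable \<mu>"
    and M_ge: "M \<ge> 1"
    and mu_ratio: "\<And>n. 1 / M \<le> \<mu> (Suc n) / \<mu> n \<and> \<mu> (Suc n) / \<mu> n \<le> 1"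
    and varpi: "w\<^sub>1 \<ge> 0" "w\<^sub>2 > 0"
    and Fn_grad_lip: "\<And>n. lipschitz_on (w\<^sub>1 + w\<^sub>2 / \<mu> n) (edom \<phi>) (gradient (Fn n))"
    and beta_pos: "\<beta> > 0" and gammabar_pos: "\<gamma>bar > 0"
    and gamma_bounds: "\<And>n. \<beta> / (w\<^sub>1 + w\<^sub>2 / \<mu> n) \<le> \<gamma> n \<and> \<gamma> n \<le> \<gamma>bar"
    and gamma_pos: "\<And>n. \<gamma> n > 0"
    and sufficient_decrease: "\<And>n.
        ereal (Fn n (prox (\<gamma> n) \<phi> (x n - \<gamma> n *\<^sub>R gradient (Fn n) (x n))))
          + \<phi> (prox (\<gamma> n) \<phi> (x n - \<gamma> n *\<^sub>R gradient (Fn n) (x n)))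
        \<le> ereal (Fn n (x n)) + \<phi> (x n)
          - ereal (c * \<gamma> n * (residual (\<gamma> n) (Fn n) \<phi> (x n))\<^sup>2)"
    and iteration: "\<And>n. x (Suc n) = prox (\<gamma> n) \<phi> (x n - \<gamma> n *\<^sub>R gradient (Fn n) (x n))"
    and m_mono: "strict_mono m"
    and residual_lim: "(\<lambda>l. residual \<gamma>bar (Fn (m l)) \<phi> (x (m l))) \<longlonglongrightarrow> 0"
    and cluster: "cluster_point (\<lambda>l. x (m l)) xstar"
  shows "0 \<in> frechet_subdiff (\<lambda>y. ereal (F y) + \<phi> y) xstar"
proof -
  have Lg0: "Lg \<ge> 0" using Lg_pos by simp
  obtain r where r: "strict_mono r" "((\<lambda>l. x (m l)) \<circ> r) \<longlonglongrightarrow> xstar"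
    using cluster unfolding cluster_point_def by blast
  define q where "q = m \<circ> r"
  have q_mono: "strict_mono q" unfolding q_def by (rule strict_mono_o[OF m_mono r(1)])
  have xq: "(\<lambda>k. x (q k)) \<longlonglongrightarrow> xstar" using r(2) by (simp add: q_def o_def)
  have resq: "(\<lambda>k. residual \<gamma>bar (Fn (q k)) \<phi> (x (q k))) \<longlonglongrightarrow> 0"
    using LIMSEQ_subseq_LIMSEQ[OF residual_lim r(1)] by (simp add: q_def o_def)
  have dom: "\<phi> (x n) < \<infinity>" for n
  proof (cases n)
    case 0 thus ?thesis using x0_dom by (simp add: edom_def)
  next
    case (Suc k)
    obtain P where "\<phi> (prox (\<gamma> k) \<phi> (x k - \<gamma> k *\<^sub>R gradient (Fn k) (x k))) = ereal P"
      using prox_fin[OF phi_proper phi_lsc phi_convex gamma_pos[of k]] by blast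
    thus ?thesis using Suc iteration[of k] by simp
  qed
  have xdom: "x n \<in> edom \<phi>" for n using dom by (simp add: edom_def)
  have mu: "\<And>n. \<mu> n > 0" "\<And>n. \<mu> n \<le> 1 / (2 * \<eta>)" using mu_bounds by auto
  define zz where "zz n = pg (\<mu> n) g (S (x n))" for n
  define vv where "vv n = (1 / \<mu> n) *\<^sub>R (S (x n) - zz n)" for n
  have gradFn: "gradient (Fn n) (x n) \<bullet> u = gradient h (x n) \<bullet> u + (blinfun_apply (DS (x n)) u) \<bullet> vv n" for n u
    unfolding Fn_def vv_def zz_def
    by (rule gradient_Fn[OF g_lip Lg0 mu(1) mu(2) eta_pos g_weakly_convex h_diff S_deriv])
  have zzmin: "g (zz n) + (norm (zz n - S (x n)))\<^sup>2 / (2 * \<mu> n) \<le> g z' + (norm (z' - S (x n)))\<^sup>2 / (2 * \<mu> n)" for n z'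
    unfolding zz_def by (rule pg_min[OF g_lip Lg0 mu(1)])
  have zzdist: "norm (zz n - S (x n)) \<le> 2 * \<mu> n * Lg" for n
    by (rule min_dist[OF g_lip Lg0 mu(1) zzmin])
  have vvb: "norm (vv n) \<le> 2 * Lg" for n
  proof -
    have "norm (vv n) = norm (zz n - S (x n)) / \<mu> n"
      using mu(1)[of n] by (simp add: vv_def norm_minus_commute)
    also have "\<dots> \<le> 2 * \<mu> n * Lg / \<mu> n" using mu(1)[of n] zzdist[of n] by (intro divide_right_mono) auto
    also have "\<dots> = 2 * Lg" using mu(1)[of n] by simp
    finally show ?thesis .
  qed
  have Lh0: "L\<^sub>h \<ge> 0" using h_grad_lip unfolding lipschitz_on_def by blast
  have hlip: "dist (gradient h a) (gradient h b) \<le> L\<^sub>h * dist a b" if "a \<in> edom \<phi>" "b \<in> edom \<phi>" for a b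
    by (rule lipschitz_onD[OF h_grad_lip that])
  obtain B where B: "\<And>k. norm (x (q k)) \<le> B"
    using convergent_imp_bounded[OF xq] unfolding bounded_iff by blast
  define Pk where "Pk k = (gradient h (x (q k)), vv (q k))" for k
  have "bounded (range Pk)"
    unfolding bounded_iff
  proof (intro exI ballI)
    fix pp assume "pp \<in> range Pk"
    then obtain k where k: "pp = Pk k" by blast
    have "dist (gradient h (x (q k))) (gradient h (x 0)) \<le> L\<^sub>h * dist (x (q k)) (x 0)"
      by (rule hlip[OF xdom xdom])
    also have "\<dots> \<le> L\<^sub>h * (B + norm (x 0))"
    proof (intro mult_left_mono Lh0)
      have "dist (x (q k)) (x 0) \<le> norm (x (q k)) + norm (x 0)"
        by (simp add: dist_norm norm_triangle_ineq4)
      thus "dist (x (q k)) (x 0) \<le> B + norm (x 0)" using B[of k] by linarith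
    qed
    finally have d: "dist (gradient h (x (q k))) (gradient h (x 0)) \<le> L\<^sub>h * (B + norm (x 0))" .
    have "norm (gradient h (x (q k))) \<le> norm (gradient h (x 0)) + L\<^sub>h * (B + norm (x 0))"
      using d norm_triangle_ineq2[of "gradient h (x (q k))" "gradient h (x 0)"]
      unfolding dist_norm by linarith
    hence "norm pp \<le> norm (gradient h (x 0)) + L\<^sub>h * (B + norm (x 0)) + 2 * Lg"
    proof -
      have "norm pp = norm (gradient h (x (q k)), vv (q k))" using k by (simp add: Pk_def)
      thus ?thesis using norm_Pair_le[of "gradient h (x (q k))" "vv (q k)"] vvb[of "q k"] \<open>norm (gradient h (x (q k))) \<le> _\<close>
        by linarith
    qed
    thus "norm pp \<le> norm (gradient h (x 0)) + L\<^sub>h * (B + norm (x 0)) + 2 * Lg" .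
  qed
  then obtain l s where s: "strict_mono s" "(Pk \<circ> s) \<longlonglongrightarrow> l"
    using bounded_imp_convergent_subsequence by blast
  define H where "H = fst l"
  define v where "v = snd l"
  define \<nu> where "\<nu> = q \<circ> s"
  have \<nu>_mono: "strict_mono \<nu>" unfolding \<nu>_def by (rule strict_mono_o[OF q_mono s(1)])
  have xk: "(\<lambda>k. x (\<nu> k)) \<longlonglongrightarrow> xstar"
    using LIMSEQ_subseq_LIMSEQ[OF xq s(1)] by (simp add: \<nu>_def o_def)
  have resk: "(\<lambda>k. residual \<gamma>bar (Fn (\<nu> k)) \<phi> (x (\<nu> k))) \<longlonglongrightarrow> 0"
    using LIMSEQ_subseq_LIMSEQ[OF resq s(1)] by (simp add: \<nu>_def o_def)
  have Hk: "(\<lambda>k. gradient h (x (\<nu> k))) \<longlonglongrightarrow> H"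
    using tendsto_fst[OF s(2)] by (simp add: H_def Pk_def \<nu>_def o_def)
  have vk: "(\<lambda>k. vv (\<nu> k)) \<longlonglongrightarrow> v"
    using tendsto_snd[OF s(2)] by (simp add: v_def Pk_def \<nu>_def o_def)
  have muk: "(\<lambda>k. \<mu> (\<nu> k)) \<longlonglongrightarrow> 0"
    using LIMSEQ_subseq_LIMSEQ[OF mu_lim \<nu>_mono] by (simp add: o_def)
  define G where "G k = gradient (Fn (\<nu> k)) (x (\<nu> k))" for k
  define pk where "pk k = prox \<gamma>bar \<phi> (x (\<nu> k) - \<gamma>bar *\<^sub>R G k)" for k
  define rk where "rk k = (1 / \<gamma>bar) *\<^sub>R (x (\<nu> k) - pk k)" for k
  have rk0: "rk \<longlonglongrightarrow> 0"
  proof -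
    have "(\<lambda>k. norm (rk k)) = (\<lambda>k. residual \<gamma>bar (Fn (\<nu> k)) \<phi> (x (\<nu> k)))"
      by (simp add: residual_def rk_def pk_def G_def)
    hence "(\<lambda>k. norm (rk k)) \<longlonglongrightarrow> 0" using resk by simp
    thus ?thesis by (simp add: tendsto_norm_zero_iff)
  qed
  have pk_eq: "pk k = x (\<nu> k) - \<gamma>bar *\<^sub>R rk k" for k
    using gammabar_pos by (simp add: rk_def)
  have pk_lim: "pk \<longlonglongrightarrow> xstar"
  proof -
    have "(\<lambda>k. x (\<nu> k) - \<gamma>bar *\<^sub>R rk k) \<longlonglongrightarrow> xstar - \<gamma>bar *\<^sub>R 0"
      by (intro tendsto_diff tendsto_scaleR tendsto_const xk rk0)
    thus ?thesis by (simp add: pk_eq[abs_def])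
  qed
  define ell where "ell k y = rk k \<bullet> (y - pk k) - (gradient h (x (\<nu> k)) \<bullet> (y - pk k)
      + (blinfun_apply (DS (x (\<nu> k))) (y - pk k)) \<bullet> vv (\<nu> k))" for k y
  define ell0 where "ell0 y = - (H \<bullet> (y - xstar) + (blinfun_apply (DS xstar) (y - xstar)) \<bullet> v)" for y
  have ineq: "\<phi> (pk k) + ereal (ell k y) \<le> \<phi> y" for k y
  proof -
    have "(1 / \<gamma>bar) *\<^sub>R ((x (\<nu> k) - \<gamma>bar *\<^sub>R G k) - pk k) = rk k - G k"
      using gammabar_pos by (simp add: rk_def algebra_simps)
    moreover have "(rk k - G k) \<bullet> (y - pk k) = ell k y"
      unfolding ell_def G_def by (simp add: inner_diff_left gradFn)
    ultimately show ?thesis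
      using prox_ineq[OF phi_proper phi_lsc phi_convex gammabar_pos, of "x (\<nu> k) - \<gamma>bar *\<^sub>R G k" y]
      unfolding pk_def[symmetric] by simp
  qed
  have DSk: "(\<lambda>k. DS (x (\<nu> k))) \<longlonglongrightarrow> DS xstar"
  proof -
    have "isCont DS xstar" using S_C1 by (simp add: continuous_on_eq_continuous_at)
    thus ?thesis using isCont_tendsto_compose xk by blast
  qed
  have ell_lim: "(\<lambda>k. ell k y) \<longlonglongrightarrow> ell0 y" for y
  proof -
    have yp: "(\<lambda>k. y - pk k) \<longlonglongrightarrow> y - xstar" by (intro tendsto_diff tendsto_const pk_lim)
    have A: "(\<lambda>k. blinfun_apply (DS (x (\<nu> k))) (y - pk k)) \<longlonglongrightarrow> blinfun_apply (DS xstar) (y - xstar)"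
      by (rule bounded_bilinear.tendsto[OF bounded_bilinear_blinfun_apply DSk yp])
    have "(\<lambda>k. ell k y) \<longlonglongrightarrow> 0 \<bullet> (y - xstar) - (H \<bullet> (y - xstar) + (blinfun_apply (DS xstar) (y - xstar)) \<bullet> v)"
      unfolding ell_def by (intro tendsto_diff tendsto_add tendsto_inner rk0 yp Hk A vk)
    thus ?thesis by (simp add: ell0_def)
  qed
  have phi_ninf: "\<And>y. \<phi> y \<noteq> -\<infinity>" using phi_proper unfolding proper_fun_def by blast
  have pk_fin: "\<exists>P. \<phi> (pk k) = ereal P" for k
    unfolding pk_def by (rule prox_fin[OF phi_proper phi_lsc phi_convex gammabar_pos])
  have lim_bound: "\<phi> xstar \<le> ereal (Y - ell0 y)" if Y: "\<phi> y = ereal Y" for y Y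
  proof (rule lsc_lim_le[OF phi_lsc pk_lim])
    fix k
    obtain P where P: "\<phi> (pk k) = ereal P" using pk_fin by blast
    have "ereal (P + ell k y) \<le> ereal Y" using ineq[of k y] by (simp add: P Y)
    thus "\<phi> (pk k) \<le> ereal (Y - ell k y)" by (simp add: P)
  next
    show "(\<lambda>k. Y - ell k y) \<longlonglongrightarrow> Y - ell0 y" by (intro tendsto_diff tendsto_const ell_lim)
  qed
  obtain a0 where a0: "\<phi> (x 0) = ereal a0" using dom[of 0] phi_ninf[of "x 0"] by (cases "\<phi> (x 0)") auto
  have "\<phi> xstar \<le> ereal (a0 - ell0 (x 0))" by (rule lim_bound[OF a0])
  then obtain X where X: "\<phi> xstar = ereal X" using phi_ninf[of xstar] by (cases "\<phi> xstar") auto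
  have PHI: "\<phi> xstar + ereal (ell0 y) \<le> \<phi> y" for y
  proof (cases "\<phi> y")
    case (real Y)
    have "\<phi> xstar \<le> ereal (Y - ell0 y)" by (rule lim_bound[OF real])
    thus ?thesis by (simp add: X real)
  next
    case PInf thus ?thesis by simp
  next
    case MInf thus ?thesis using phi_ninf by simp
  qed
  have xsdom: "xstar \<in> edom \<phi>" by (simp add: edom_def X)
  have Hk': "(\<lambda>k. gradient h (x (\<nu> k))) \<longlonglongrightarrow> gradient h xstar"
  proof (rule tendsto_dist_iff[THEN iffD2], rule Lim_null_comparison)
    show "\<forall>\<^sub>F k in sequentially. norm (dist (gradient h (x (\<nu> k))) (gradient h xstar)) \<le> L\<^sub>h * dist (x (\<nu> k)) xstar"
      using hlip[OF xdom xsdom] by (intro always_eventually allI) simp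
    have "(\<lambda>k. dist (x (\<nu> k)) xstar) \<longlonglongrightarrow> 0" using tendsto_dist_iff[THEN iffD1, OF xk] .
    thus "(\<lambda>k. L\<^sub>h * dist (x (\<nu> k)) xstar) \<longlonglongrightarrow> 0" by (rule tendsto_mult_right_zero)
  qed
  have H: "H = gradient h xstar" using LIMSEQ_unique[OF Hk Hk'] .
  have Scont: "isCont S xstar" using has_derivative_continuous[OF S_deriv[of xstar]] by simp
  have Sk: "(\<lambda>k. S (x (\<nu> k))) \<longlonglongrightarrow> S xstar" using isCont_tendsto_compose[OF Scont xk] .
  have zk: "(\<lambda>k. zz (\<nu> k)) \<longlonglongrightarrow> S xstar"
  proof -
    have "(\<lambda>k. zz (\<nu> k) - S (x (\<nu> k))) \<longlonglongrightarrow> 0"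
    proof (rule Lim_null_comparison)
      show "\<forall>\<^sub>F k in sequentially. norm (zz (\<nu> k) - S (x (\<nu> k))) \<le> 2 * Lg * \<mu> (\<nu> k)"
      proof (intro always_eventually allI)
        fix k show "norm (zz (\<nu> k) - S (x (\<nu> k))) \<le> 2 * Lg * \<mu> (\<nu> k)"
          using zzdist[of "\<nu> k"] by (simp add: mult.commute mult.left_commute)
      qed
      show "(\<lambda>k. 2 * Lg * \<mu> (\<nu> k)) \<longlonglongrightarrow> 0" by (rule tendsto_mult_right_zero[OF muk])
    qed
    hence "(\<lambda>k. (zz (\<nu> k) - S (x (\<nu> k))) + S (x (\<nu> k))) \<longlonglongrightarrow> 0 + S xstar"
      by (intro tendsto_add Sk)
    thus ?thesis by simp
  qed
  have gcont: "isCont g z" for z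
    using lipschitz_on_continuous_on[OF g_lip] by (simp add: continuous_on_eq_continuous_at)
  have GS: "g (S xstar) + v \<bullet> (z' - S xstar) - \<eta> / 2 * (norm (z' - S xstar))\<^sup>2 \<le> g z'" for z'
  proof (rule LIMSEQ_le_const2)
    show "(\<lambda>k. g (zz (\<nu> k)) + vv (\<nu> k) \<bullet> (z' - zz (\<nu> k)) - \<eta> / 2 * (norm (z' - zz (\<nu> k)))\<^sup>2)
        \<longlonglongrightarrow> g (S xstar) + v \<bullet> (z' - S xstar) - \<eta> / 2 * (norm (z' - S xstar))\<^sup>2"
    proof -
      have t1: "(\<lambda>k. g (zz (\<nu> k))) \<longlonglongrightarrow> g (S xstar)" by (rule isCont_tendsto_compose[OF gcont zk])
      have t2: "(\<lambda>k. z' - zz (\<nu> k)) \<longlonglongrightarrow> z' - S xstar" by (rule tendsto_diff[OF tendsto_const zk])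
      have t3: "(\<lambda>k. vv (\<nu> k) \<bullet> (z' - zz (\<nu> k))) \<longlonglongrightarrow> v \<bullet> (z' - S xstar)" by (rule tendsto_inner[OF vk t2])
      have t4: "(\<lambda>k. \<eta> / 2 * (norm (z' - zz (\<nu> k)))\<^sup>2) \<longlonglongrightarrow> \<eta> / 2 * (norm (z' - S xstar))\<^sup>2"
        by (rule tendsto_mult_left[OF tendsto_power[OF tendsto_norm[OF t2]]])
      show ?thesis by (rule tendsto_diff[OF tendsto_add[OF t1 t3] t4])
    qed
    show "\<exists>N. \<forall>k\<ge>N. g (zz (\<nu> k)) + vv (\<nu> k) \<bullet> (z' - zz (\<nu> k)) - \<eta> / 2 * (norm (z' - zz (\<nu> k)))\<^sup>2 \<le> g z'"
    proof (intro exI allI impI)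
      fix k
      show "g (zz (\<nu> k)) + vv (\<nu> k) \<bullet> (z' - zz (\<nu> k)) - \<eta> / 2 * (norm (z' - zz (\<nu> k)))\<^sup>2 \<le> g z'"
        unfolding vv_def by (rule weak_subgrad[OF g_weakly_convex mu(1) zzmin])
    qed
  qed
  have hd: "(h has_derivative (\<lambda>u. H \<bullet> u)) (at xstar)"
    unfolding H by (rule gradient_has_derivative[OF h_diff])
  have "0 \<in> frechet_subdiff (\<lambda>y. ereal (h y + g (S y)) + \<phi> y) xstar"
    by (rule frechet_final[OF hd S_deriv X PHI[unfolded ell0_def] GS eta_pos])
  thus ?thesis by (simp add: F_def)
qed

end
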